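(* Let $(\Omega,\mathcal F,\mu)$ be a finite measure space, $p\in[1,\infty)$, $k\ge1$, and $f\in L^p(\Omega,\mathcal F,\mu)$ with continuous cumulative distribution function $F_f$. Then every minimizer $g\in\mathscr G_{p,k}$ of $\|f-g\|_p$ satisfies, $\mu$-a.e., $g=\sum_{i=1}^k a_i\mathbf 1_{f^{-1}([r_i,r_{i+1}))}$ where $a_1<\dots<a_k$, $\mathfrak a_f=r_1<r_2<\dots<r_k<r_{k+1}=\mathfrak b_f$, $r_i=\frac{a_{i-1}+a_i}{2}$ for $2\le i\le k$, each $[r_i,r_{i+1})$ has positive $\mu_f$-measure, and each $a_i$ is a $p$-th mean of the identity function on $[r_i,r_{i+1})$ with respect to $\mu_f$. If moreover $F_f$ is strictly increasing on $[\mathfrak a_f,\mathfrak b_f]$, then $a_i=\mathcal M_p(\mathrm{id},[r_i,r_{i+1}),\mu_f)$ for all $i$.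
   Context: $\mathscr G_{p,k}$ is the set of functions $\sum_{i=1}^l a_i\mathbf 1_{A_i}\in L^p$ with $l\le k$, $\{A_i\}$ a measurable partition of $\Omega$, $a_i\in\mathbb R$. $\mu_f=\mu\circ f^{-1}$, $F_f(x)=\mu_f((-\infty,x])$, $\mathfrak a_f=\sup\{z:F_f(z)=0\}$, $\mathfrak b_f=\inf\{z:F_f(z)=\mu(\Omega)\}$. A $p$-th mean of a function $h$ on a set $A$ of positive finite measure (for a measure $\nu$) is any minimizer over $a\in\mathbb R$ of $\int_A|h-a|^p\,d\nu$; for $p>1$ it is unique, denoted $\mathcal M_p(h,A,\nu)$; for $p=1$ the minimizers form a closed bounded interval $[a^*,b^*]$ and $\mathcal M_1(h,A,\nu)=(a^*+b^* )/2$. *)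

theory Defs
  imports "HOL-Analysis.Analysis"
begin

definition memLp :: "'a measure \<Rightarrow> real \<Rightarrow> ('a \<Rightarrow> real) \<Rightarrow> bool" where
  "memLp M p f \<longleftrightarrow> f \<in> borel_measurable M \<and> integrable M (\<lambda>x. \<bar>f x\<bar> powr p)"

definition Lp_norm :: "'a measure \<Rightarrow> real \<Rightarrow> ('a \<Rightarrow> real) \<Rightarrow> real" where
  "Lp_norm M p f = (\<integral>x. \<bar>f x\<bar> powr p \<partial>M) powr (1 / p)"

definition Gpk :: "'a measure \<Rightarrow> real \<Rightarrow> nat \<Rightarrow> ('a \<Rightarrow> real) set" where
  "Gpk M p k = {g. \<exists>l (a::nat \<Rightarrow> real) (A::nat \<Rightarrow> 'a set).
      l \<le> k \<and> (\<forall>i<l. A i \<in> sets M) \<and> disjoint_family_on A {..<l}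
      \<and> (\<Union>i<l. A i) = space M
      \<and> (\<forall>x\<in>space M. g x = (\<Sum>i<l. a i * indicator (A i) x))
      \<and> memLp M p g}"

definition push :: "'a measure \<Rightarrow> ('a \<Rightarrow> real) \<Rightarrow> real measure" where
  "push M f = distr M borel f"

definition cdf_of :: "'a measure \<Rightarrow> ('a \<Rightarrow> real) \<Rightarrow> real \<Rightarrow> real" where
  "cdf_of M f x = measure (push M f) {..x}"

text \<open>Essential lower/upper endpoints (extended reals: Sup {} = -\<infinity>, Inf {} = \<infinity>).\<close>
definition afrak :: "'a measure \<Rightarrow> ('a \<Rightarrow> real) \<Rightarrow> ereal" where
  "afrak M f = Sup (ereal ` {z. cdf_of M f z = 0})"

definition bfrak :: "'a measure \<Rightarrow> ('a \<Rightarrow> real) \<Rightarrow> ereal" where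
  "bfrak M f = Inf (ereal ` {z. cdf_of M f z = measure M (space M)})"

definition is_pth_mean :: "real \<Rightarrow> (real \<Rightarrow> real) \<Rightarrow> real set \<Rightarrow> real measure \<Rightarrow> real \<Rightarrow> bool" where
  "is_pth_mean p h A \<nu> a \<longleftrightarrow>
     (\<forall>b. (\<integral>\<^sup>+x. ennreal (\<bar>h x - a\<bar> powr p) * indicator A x \<partial>\<nu>)
          \<le> (\<integral>\<^sup>+x. ennreal (\<bar>h x - b\<bar> powr p) * indicator A x \<partial>\<nu>))"

text \<open>M_p: the unique p-th mean for p > 1; midpoint of the interval of minimisers for p = 1.\<close>
definition Mp :: "real \<Rightarrow> (real \<Rightarrow> real) \<Rightarrow> real set \<Rightarrow> real measure \<Rightarrow> real" where
  "Mp p h A \<nu> = (if p > 1 then (THE a. is_pth_mean p h A \<nu> a)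
     else (Inf {a. is_pth_mean p h A \<nu> a} + Sup {a. is_pth_mean p h A \<nu> a}) / 2)"

definition eico :: "ereal \<Rightarrow> ereal \<Rightarrow> real set" where
  "eico r s = {x. r \<le> ereal x \<and> ereal x < s}"

end

theory Submission
  imports Defs "HOL-Probability.Distribution_Functions"
begin

definition dS :: "real set \<Rightarrow> real \<Rightarrow> real" where
  "dS W x = Min ((\<lambda>w. \<bar>x - w\<bar>) ` W)"

lemma dS_le: "finite W \<Longrightarrow> w \<in> W \<Longrightarrow> dS W x \<le> \<bar>x - w\<bar>"
  unfolding dS_def by (rule Min_le) auto

lemma dS_ex: "finite W \<Longrightarrow> W \<noteq> {} \<Longrightarrow> \<exists>w\<in>W. dS W x = \<bar>x - w\<bar>"
proof -
  assume "finite W" "W \<noteq> {}"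
  then have "dS W x \<in> (\<lambda>w. \<bar>x - w\<bar>) ` W" unfolding dS_def by (intro Min_in) auto
  then show ?thesis by auto
qed

lemma dS_nonneg: "finite W \<Longrightarrow> W \<noteq> {} \<Longrightarrow> 0 \<le> dS W x"
proof -
  assume "finite W" "W \<noteq> {}"
  then obtain w where "dS W x = \<bar>x - w\<bar>" using dS_ex by blast
  then show ?thesis by simp
qed

lemma dS_lip: "finite W \<Longrightarrow> W \<noteq> {} \<Longrightarrow> dS W x \<le> \<bar>x - y\<bar> + dS W y"
proof -
  assume a: "finite W" "W \<noteq> {}"
  then obtain w where w: "w \<in> W" "dS W y = \<bar>y - w\<bar>" using dS_ex by blast
  have "dS W x \<le> \<bar>x - w\<bar>" using dS_le a w by blast
  then show ?thesis using w by linarith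
qed

lemma dS_pos: "finite W \<Longrightarrow> W \<noteq> {} \<Longrightarrow> x \<notin> W \<Longrightarrow> 0 < dS W x"
proof -
  assume a: "finite W" "W \<noteq> {}" "x \<notin> W"
  then obtain w where "w \<in> W" "dS W x = \<bar>x - w\<bar>" using dS_ex by blast
  moreover have "x \<noteq> w" using a \<open>w \<in> W\<close> by auto
  ultimately show ?thesis by simp
qed

lemma dS_meas[measurable]: "finite W \<Longrightarrow> dS W \<in> borel_measurable borel"
  unfolding dS_def by measurable

lemma dS_mono: "finite W \<Longrightarrow> U \<subseteq> W \<Longrightarrow> U \<noteq> {} \<Longrightarrow> dS W x \<le> dS U x"
proof -
  assume a: "finite W" "U \<subseteq> W" "U \<noteq> {}"
  then have "finite U" using finite_subset by blast
  then obtain u where "u \<in> U" "dS U x = \<bar>x - u\<bar>" using dS_ex a by blast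
  then show ?thesis using dS_le[OF a(1)] a(2) by auto
qed

lemma eico_sets[measurable]: "eico r s \<in> sets borel"
proof -
  have "eico r s = {x\<in>space borel. r \<le> ereal x \<and> ereal x < s}" unfolding eico_def by auto
  also have "\<dots> \<in> sets borel" by measurable
  finally show ?thesis .
qed

lemma powr_diff_bound:
  fixes a b p :: real assumes "0 < p"
  shows "\<bar>a - b\<bar> powr p \<le> 2 powr p * (\<bar>a\<bar> powr p + \<bar>b\<bar> powr p)"
proof -
  have "\<bar>a - b\<bar> \<le> 2 * max \<bar>a\<bar> \<bar>b\<bar>" by auto
  then have "\<bar>a - b\<bar> powr p \<le> (2 * max \<bar>a\<bar> \<bar>b\<bar>) powr p"
    by (intro powr_mono2) (use assms in auto)
  also have "\<dots> = 2 powr p * max \<bar>a\<bar> \<bar>b\<bar> powr p" by (simp add: powr_mult)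
  also have "max \<bar>a\<bar> \<bar>b\<bar> powr p \<le> \<bar>a\<bar> powr p + \<bar>b\<bar> powr p"
    by (cases "\<bar>a\<bar> \<le> \<bar>b\<bar>") (auto simp: max_def)
  finally show ?thesis by simp
qed

lemma integrable_diff_powr:
  assumes "memLp M p f" "memLp M p h" "0 < p"
  shows "integrable M (\<lambda>x. \<bar>f x - h x\<bar> powr p)"
proof (rule Bochner_Integration.integrable_bound)
  have [measurable]: "f \<in> borel_measurable M" "h \<in> borel_measurable M" using assms unfolding memLp_def by auto
  show "integrable M (\<lambda>x. 2 powr p * (\<bar>f x\<bar> powr p + \<bar>h x\<bar> powr p))"
    using assms unfolding memLp_def by auto
  show "(\<lambda>x. \<bar>f x - h x\<bar> powr p) \<in> borel_measurable M" by measurable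
  show "AE x in M. norm (\<bar>f x - h x\<bar> powr p) \<le> norm (2 powr p * (\<bar>f x\<bar> powr p + \<bar>h x\<bar> powr p))"
    using powr_diff_bound[OF assms(3)] by auto
qed

lemma midpoint_powr:
  fixes u v p :: real assumes "1 \<le> p" "0 \<le> u" "0 \<le> v"
  shows "2 * ((u + v) / 2) powr p \<le> u powr p + v powr p"
proof (cases "u = 0 \<or> v = 0")
  case True
  have h: "2 * (w / 2) powr p \<le> w powr p" if "0 \<le> w" for w :: real
  proof -
    have "(w/2) powr p = w powr p * (1/2) powr p" using that by (simp add: powr_divide)
    moreover have "(1/2::real) powr p \<le> (1/2) powr 1"
      using assms(1) by (intro powr_mono') auto
    moreover have "0 \<le> w powr p" by simp
    ultimately have "(w/2) powr p \<le> w powr p * (1/2)"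
      using mult_left_mono[of "(1/2::real) powr p" "(1/2) powr 1" "w powr p"] by simp
    then show ?thesis by simp
  qed
  show ?thesis using True h[of u] h[of v] assms by auto
next
  case False
  then have pos: "0 < u" "0 < v" using assms by auto
  have "convex_on {0<..} (\<lambda>x::real. x powr p)" using powr_convex assms(1) by blast
  then have "((1 - 1/2) *\<^sub>R u + (1/2) *\<^sub>R v) powr p \<le> (1 - 1/2) * u powr p + (1/2) * v powr p"
    using pos by (intro convex_onD) auto
  moreover have "(1 - 1/2) *\<^sub>R u + (1/2) *\<^sub>R v = (u + v) / 2" by simp
  ultimately have "((u + v) / 2) powr p \<le> u powr p / 2 + v powr p / 2" by (simp add: add_divide_distrib)
  then show ?thesis by simp
qed

lemma midpoint_abs_powr:
  fixes x m1 m2 p :: real assumes "1 \<le> p"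
  shows "2 * \<bar>x - (m1 + m2) / 2\<bar> powr p \<le> \<bar>x - m1\<bar> powr p + \<bar>x - m2\<bar> powr p"
    and "m1 < x \<Longrightarrow> x < m2 \<Longrightarrow> 2 * \<bar>x - (m1 + m2) / 2\<bar> powr p < \<bar>x - m1\<bar> powr p + \<bar>x - m2\<bar> powr p"
proof -
  have e: "x - (m1 + m2) / 2 = ((x - m1) + (x - m2)) / 2" by (simp add: field_simps)
  have a: "\<bar>x - (m1 + m2) / 2\<bar> \<le> (\<bar>x - m1\<bar> + \<bar>x - m2\<bar>) / 2"
    unfolding e using abs_triangle_ineq[of "x - m1" "x - m2"] by simp
  have "\<bar>x - (m1 + m2) / 2\<bar> powr p \<le> ((\<bar>x - m1\<bar> + \<bar>x - m2\<bar>) / 2) powr p"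
    using a assms by (intro powr_mono2) auto
  then show "2 * \<bar>x - (m1 + m2) / 2\<bar> powr p \<le> \<bar>x - m1\<bar> powr p + \<bar>x - m2\<bar> powr p"
    using midpoint_powr[OF assms, of "\<bar>x - m1\<bar>" "\<bar>x - m2\<bar>"] by auto
  assume "m1 < x" "x < m2"
  then have s: "\<bar>x - m1\<bar> + \<bar>x - m2\<bar> = m2 - m1" by auto
  have e1: "(m1 + m2) / 2 = m1 / 2 + m2 / 2" "(m2 - m1) / 2 = m2 / 2 - m1 / 2" by simp_all
  have "\<bar>x - (m1 + m2) / 2\<bar> < (m2 - m1) / 2" unfolding abs_less_iff e1
    using \<open>m1 < x\<close> \<open>x < m2\<close> by (intro conjI; linarith)
  then have "\<bar>x - (m1 + m2) / 2\<bar> < (\<bar>x - m1\<bar> + \<bar>x - m2\<bar>) / 2" using s by simp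
  then have "\<bar>x - (m1 + m2) / 2\<bar> powr p < ((\<bar>x - m1\<bar> + \<bar>x - m2\<bar>) / 2) powr p"
    using assms by (intro powr_less_mono2) auto
  then show "2 * \<bar>x - (m1 + m2) / 2\<bar> powr p < \<bar>x - m1\<bar> powr p + \<bar>x - m2\<bar> powr p"
    using midpoint_powr[OF assms, of "\<bar>x - m1\<bar>" "\<bar>x - m2\<bar>"] by auto
qed

lemma sum_indicator_disj:
  fixes l :: nat
  assumes "disjoint_family_on A {..<l}" "i < l" "x \<in> A i"
  shows "(\<Sum>j<l. a j * indicator (A j) x) = (a i :: real)"
proof -
  have "(\<Sum>j<l. a j * indicator (A j) x) = (\<Sum>j<l. if j = i then a j else 0)"
  proof (rule sum.cong)
    fix j assume "j \<in> {..<l}"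
    then show "a j * indicator (A j) x = (if j = i then a j else 0)"
      using assms unfolding disjoint_family_on_def by (auto simp: indicator_def)
  qed simp
  also have "\<dots> = a i" using assms(2) by simp
  finally show ?thesis .
qed

lemma Gpk_props:
  assumes "g \<in> Gpk M p k"
  shows "memLp M p g" "finite (g ` space M)" "card (g ` space M) \<le> k"
proof -
  obtain l a A where l: "l \<le> k" and As: "\<forall>i<l. A i \<in> sets M" and dj: "disjoint_family_on A {..<l}"
    and un: "(\<Union>i<l. A i) = space M" and gd: "\<forall>x\<in>space M. g x = (\<Sum>i<l. a i * indicator (A i) x)"
    and mem: "memLp M p g"
    using assms unfolding Gpk_def by blast
  show "memLp M p g" by fact
  have sub: "g ` space M \<subseteq> a ` {..<l}"
  proof
    fix y assume "y \<in> g ` space M"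
    then obtain x where x: "x \<in> space M" "y = g x" by auto
    then obtain i where i: "i < l" "x \<in> A i" using un by auto
    show "y \<in> a ` {..<l}" using x gd i sum_indicator_disj[OF dj i] by auto
  qed
  show "finite (g ` space M)" using sub finite_subset by blast
  have "card (g ` space M) \<le> card (a ` {..<l})" using sub by (intro card_mono) auto
  also have "\<dots> \<le> l" using card_image_le by (metis card_lessThan finite_lessThan)
  finally show "card (g ` space M) \<le> k" using l by simp
qed

lemma nearest_Gpk:
  assumes fin: "finite_measure M" and f: "memLp M p f" and p: "0 < p"
    and W: "finite W" "W \<noteq> {}" "card W \<le> k"
  shows "\<exists>h\<in>Gpk M p k. \<forall>\<omega>\<in>space M. \<bar>f \<omega> - h \<omega>\<bar> = dS W (f \<omega>)"
proof -
  have [measurable]: "f \<in> borel_measurable M" using f memLp_def by auto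
  define l where "l = card W"
  obtain e where e: "bij_betw e {0..<l} W" using ex_bij_betw_nat_finite[OF W(1)] l_def by blast
  have eW: "e i \<in> W" if "i < l" for i using e that bij_betwE by fastforce
  have We: "\<exists>i<l. e i = w" if "w \<in> W" for w
    using e that unfolding bij_betw_def by auto
  define A where "A i = {\<omega>\<in>space M. (\<forall>j<l. \<bar>f \<omega> - e i\<bar> \<le> \<bar>f \<omega> - e j\<bar>) \<and> (\<forall>j<i. \<bar>f \<omega> - e i\<bar> < \<bar>f \<omega> - e j\<bar>)}" for i
  define h where "h \<omega> = (\<Sum>i<l. e i * indicator (A i) \<omega>)" for \<omega>
  have As[measurable]: "A i \<in> sets M" for i unfolding A_def by measurable
  have dj1: "\<omega> \<notin> A n" if "\<omega> \<in> A m" "m < n" "n < l" for \<omega> m n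
  proof
    assume "\<omega> \<in> A n"
    then have "\<bar>f \<omega> - e n\<bar> < \<bar>f \<omega> - e m\<bar>" using that(2) unfolding A_def by blast
    moreover have "\<bar>f \<omega> - e m\<bar> \<le> \<bar>f \<omega> - e n\<bar>" using that(1,3) unfolding A_def by blast
    ultimately show False by linarith
  qed
  have dj: "disjoint_family_on A {..<l}"
    unfolding disjoint_family_on_def
  proof (intro ballI impI)
    fix m n assume mn: "m \<in> {..<l}" "n \<in> {..<l}" "m \<noteq> n"
    show "A m \<inter> A n = {}"
    proof (cases "m < n")
      case True then show ?thesis using mn dj1 by blast
    next
      case False then have "n < m" using mn by linarith
      then show ?thesis using mn dj1 by blast
    qed
  qed
  have key: "\<exists>i<l. \<omega> \<in> A i \<and> \<bar>f \<omega> - e i\<bar> = dS W (f \<omega>)" if \<omega>: "\<omega> \<in> space M" for \<omega>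
  proof -
    define P where "P i \<longleftrightarrow> i < l \<and> \<bar>f \<omega> - e i\<bar> = dS W (f \<omega>)" for i
    obtain w where w: "w \<in> W" "dS W (f \<omega>) = \<bar>f \<omega> - w\<bar>" using dS_ex W by blast
    then obtain i0 where "P i0" using We P_def by fastforce
    define i where "i = (LEAST i. P i)"
    have Pi: "P i" using LeastI \<open>P i0\<close> i_def by metis
    have nP: "\<not> P j" if "j < i" for j using not_less_Least i_def that by blast
    have "\<omega> \<in> A i" unfolding A_def
    proof (intro CollectI conjI allI impI)
      show "\<omega> \<in> space M" by fact
      fix j assume "j < l"
      then show "\<bar>f \<omega> - e i\<bar> \<le> \<bar>f \<omega> - e j\<bar>" using Pi P_def dS_le[OF W(1) eW] by auto
    next
      fix j assume j: "j < i"
      then have "j < l" using Pi P_def by auto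
      then have "dS W (f \<omega>) \<le> \<bar>f \<omega> - e j\<bar>" using dS_le[OF W(1) eW] by auto
      then show "\<bar>f \<omega> - e i\<bar> < \<bar>f \<omega> - e j\<bar>" using nP[OF j] \<open>j < l\<close> Pi P_def by force
    qed
    then show ?thesis using Pi P_def by auto
  qed
  have hval: "h \<omega> = e i" if "\<omega> \<in> A i" "i < l" for \<omega> i
    unfolding h_def using sum_indicator_disj[OF dj that(2,1)] .
  define S where "S = (\<Sum>i<l. \<bar>e i\<bar>)"
  have hb: "\<bar>h \<omega>\<bar> \<le> S" if om: "\<omega> \<in> space M" for \<omega>
  proof -
    obtain i where i: "i < l" "\<omega> \<in> A i" using key[of \<omega>] om by blast
    have "\<bar>e i\<bar> \<le> S" unfolding S_def using i by (intro member_le_sum) auto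
    then show ?thesis using hval[OF i(2,1)] by simp
  qed
  have hm[measurable]: "h \<in> borel_measurable M" unfolding h_def by measurable
  have "integrable M (\<lambda>x. \<bar>h x\<bar> powr p)"
  proof (rule Bochner_Integration.integrable_bound)
    show "integrable M (\<lambda>x. S powr p)" using finite_measure.integrable_const[OF fin] by blast
    show "(\<lambda>x. \<bar>h x\<bar> powr p) \<in> borel_measurable M" by measurable
    show "AE x in M. norm (\<bar>h x\<bar> powr p) \<le> norm (S powr p)"
      using hb p by (intro AE_I2) (auto intro!: powr_mono2)
  qed
  then have "memLp M p h" unfolding memLp_def using hm by blast
  moreover have "(\<Union>i<l. A i) = space M"
  proof
    show "(\<Union>i<l. A i) \<subseteq> space M" unfolding A_def by blast
    show "space M \<subseteq> (\<Union>i<l. A i)"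
    proof
      fix \<omega> assume "\<omega> \<in> space M"
      then obtain i where "i < l" "\<omega> \<in> A i" using key[of \<omega>] by blast
      then show "\<omega> \<in> (\<Union>i<l. A i)" by blast
    qed
  qed
  ultimately have "h \<in> Gpk M p k" unfolding Gpk_def
    apply (intro CollectI exI[of _ l] exI[of _ e] exI[of _ A])
    using dj l_def W(3) h_def by simp
  moreover have "\<forall>\<omega>\<in>space M. \<bar>f \<omega> - h \<omega>\<bar> = dS W (f \<omega>)"
  proof
    fix \<omega> assume "\<omega> \<in> space M"
    then obtain i where i: "i < l" "\<omega> \<in> A i" "\<bar>f \<omega> - e i\<bar> = dS W (f \<omega>)" using key[of \<omega>] by blast
    show "\<bar>f \<omega> - h \<omega>\<bar> = dS W (f \<omega>)" using hval[OF i(2,1)] i(3) by simp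
  qed
  ultimately show ?thesis by blast
qed

lemma fin_sets: "finite (S::real set) \<Longrightarrow> S \<in> sets borel"
  by (simp add: borel_closed finite_imp_closed)

context
  fixes N :: "real measure"
  assumes fbm: "finite_borel_measure N"
begin

lemma fmN: "finite_measure N" using fbm unfolding finite_borel_measure_def by blast
lemma N_sets: "sets N = sets borel" using fbm unfolding finite_borel_measure_def finite_borel_measure_axioms_def by blast
lemma N_space: "space N = UNIV" using N_sets sets_eq_imp_space_eq by fastforce
lemma meas_N: "h \<in> borel_measurable borel \<Longrightarrow> h \<in> borel_measurable N"
  using measurable_cong_sets[OF N_sets refl] by blast

lemma emeasure_single0: "isCont (cdf N) x \<Longrightarrow> emeasure N {x} = 0"
  using finite_borel_measure.isCont_cdf[OF fbm] finite_measure.emeasure_eq_measure[OF fmN] by simp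

lemma finite_null: "(\<forall>x. emeasure N {x} = 0) \<Longrightarrow> finite S \<Longrightarrow> emeasure N S = 0"
  by (subst emeasure_eq_sum_singleton) (auto simp: N_sets)

lemma ball_exists:
  assumes at: "\<forall>x. emeasure N {x} = 0" and nz: "emeasure N UNIV \<noteq> 0" and U: "finite U" "U \<noteq> {}"
  shows "\<exists>w. w \<notin> U \<and> emeasure N (ball w (dS U w / 2)) \<noteq> 0"
proof (rule ccontr)
  assume "\<not> ?thesis"
  then have H: "emeasure N (ball w (dS U w / 2)) = 0" if "w \<notin> U" for w using that by blast
  define Q where "Q = {q. q \<in> \<rat> \<and> q \<notin> U}"
  have cQ: "countable Q" unfolding Q_def by (rule countable_subset[OF _ countable_rat]) auto
  have nU: "(\<Union>q\<in>Q. ball q (dS U q / 2)) \<in> null_sets N"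
    by (rule null_sets_UN'[OF cQ]) (auto simp: Q_def N_sets intro!: H null_setsI)
  have cover: "UNIV \<subseteq> U \<union> (\<Union>q\<in>Q. ball q (dS U q / 2))"
  proof
    fix x :: real assume "x \<in> UNIV"
    show "x \<in> U \<union> (\<Union>q\<in>Q. ball q (dS U q / 2))"
    proof (cases "x \<in> U")
      case False
      define \<delta> where "\<delta> = dS U x"
      have \<delta>: "0 < \<delta>" using dS_pos[OF U False] \<delta>_def by simp
      obtain q where q: "q \<in> \<rat>" "x < q" "q < x + \<delta>/4" using Rats_dense_in_real[of x "x + \<delta>/4"] \<delta> by auto
      have qU: "q \<notin> U"
      proof
        assume "q \<in> U" then have "\<delta> \<le> \<bar>x - q\<bar>" using dS_le[OF U(1)] \<delta>_def by blast
        then show False using q \<delta> by auto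
      qed
      have "\<delta> \<le> \<bar>x - q\<bar> + dS U q" using dS_lip[OF U, of x q] \<delta>_def by simp
      then have "dist q x < dS U q / 2" using q \<delta> by (auto simp: dist_real_def)
      then show ?thesis using qU q(1) unfolding Q_def by auto
    qed simp
  qed
  have bs: "(\<Union>q\<in>Q. ball q (dS U q / 2)) \<in> sets borel" using nU N_sets null_setsD2 by metis
  have "emeasure N UNIV \<le> emeasure N (U \<union> (\<Union>q\<in>Q. ball q (dS U q / 2)))"
    using cover bs U(1) by (intro emeasure_mono) (auto simp: N_sets fin_sets)
  also have "\<dots> \<le> emeasure N U + emeasure N (\<Union>q\<in>Q. ball q (dS U q / 2))"
    using bs U(1) by (intro emeasure_subadditive) (auto simp: N_sets fin_sets)
  also have "\<dots> = 0" using nU finite_null[OF at U(1)] by auto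
  finally show False using nz by simp
qed

lemma split_lemma:
  assumes at: "\<forall>x. emeasure N {x} = 0" and nz: "emeasure N UNIV \<noteq> 0" and U: "finite U" "U \<noteq> {}"
    and p: "0 < p" and fin: "(\<integral>\<^sup>+x. ennreal (dS U x powr p) \<partial>N) \<noteq> \<infinity>"
  shows "\<exists>w. w \<notin> U \<and> (\<integral>\<^sup>+x. ennreal (dS (insert w U) x powr p) \<partial>N) < (\<integral>\<^sup>+x. ennreal (dS U x powr p) \<partial>N)"
proof -
  obtain w where w: "w \<notin> U" "emeasure N (ball w (dS U w / 2)) \<noteq> 0" using ball_exists[OF at nz U] by blast
  have fU: "finite (insert w U)" using U by simp
  have le: "dS (insert w U) x \<le> dS U x" for x using dS_mono[OF fU] U by auto
  have lt: "dS (insert w U) x < dS U x" if "x \<in> ball w (dS U w / 2)" for x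
  proof -
    have "dS (insert w U) x \<le> \<bar>x - w\<bar>" using dS_le[OF fU] by simp
    moreover have "dS U w \<le> \<bar>w - x\<bar> + dS U x" using dS_lip[OF U] .
    moreover have "\<bar>x - w\<bar> < dS U w / 2" using that by (simp add: dist_real_def abs_minus_commute)
    ultimately show ?thesis by (simp add: abs_minus_commute)
  qed
  have m1[measurable]: "dS (insert w U) \<in> borel_measurable N" using meas_N dS_meas fU by blast
  have m2[measurable]: "dS U \<in> borel_measurable N" using meas_N dS_meas U by blast
  have "(\<integral>\<^sup>+x. ennreal (dS (insert w U) x powr p) \<partial>N) < (\<integral>\<^sup>+x. ennreal (dS U x powr p) \<partial>N)"
  proof (rule nn_integral_less)
    show "(\<lambda>x. ennreal (dS (insert w U) x powr p)) \<in> borel_measurable N" by measurable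
    show "(\<lambda>x. ennreal (dS U x powr p)) \<in> borel_measurable N" by measurable
    have "(\<integral>\<^sup>+x. ennreal (dS (insert w U) x powr p) \<partial>N) \<le> (\<integral>\<^sup>+x. ennreal (dS U x powr p) \<partial>N)"
      using le p dS_nonneg[OF fU] by (intro nn_integral_mono ennreal_leI powr_mono2) auto
    then show "(\<integral>\<^sup>+x. ennreal (dS (insert w U) x powr p) \<partial>N) \<noteq> \<infinity>" using fin by (auto simp: top_unique)
    show "AE x in N. ennreal (dS (insert w U) x powr p) \<le> ennreal (dS U x powr p)"
      using le p dS_nonneg[OF fU] by (intro AE_I2 ennreal_leI powr_mono2) auto
    show "\<not> (AE x in N. ennreal (dS U x powr p) \<le> ennreal (dS (insert w U) x powr p))"
    proof
      assume a: "AE x in N. ennreal (dS U x powr p) \<le> ennreal (dS (insert w U) x powr p)"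
      have "AE x in N. x \<notin> ball w (dS U w / 2)"
        using a
      proof (rule eventually_mono)
        fix x assume h: "ennreal (dS U x powr p) \<le> ennreal (dS (insert w U) x powr p)"
        show "x \<notin> ball w (dS U w / 2)"
        proof
          assume "x \<in> ball w (dS U w / 2)"
          then have lt': "dS (insert w U) x powr p < dS U x powr p"
            using lt p dS_nonneg[OF fU] by (intro powr_less_mono2) auto
          show False using h lt' by simp
        qed
      qed
      then have "emeasure N (ball w (dS U w / 2)) = 0"
        by (subst (asm) AE_iff_measurable[of "ball w (dS U w / 2)"]) (auto simp: N_sets N_space)
      then show False using w by simp
    qed
  qed
  then show ?thesis using w by blast
qed

lemma afrak_null:
  assumes cont: "\<And>x. isCont (cdf N) x" and T: "0 < measure N (space N)"
  shows "emeasure N {x. ereal x < Sup (ereal ` {z. cdf N z = 0})} = 0"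
proof -
  define F where "F = cdf N"
  define A0 where "A0 = Sup (ereal ` {z. F z = 0})"
  have mono: "x \<le> y \<Longrightarrow> F x \<le> F y" for x y using finite_borel_measure.cdf_nondecreasing[OF fbm] F_def by blast
  have nn: "0 \<le> F x" for x using finite_borel_measure.cdf_nonneg[OF fbm] F_def by blast
  have "emeasure N {x. ereal x < A0} = 0"
  proof (cases A0)
    case (real c)
    have Fc: "F c = 0"
    proof (rule ccontr)
      assume "F c \<noteq> 0" then have pos: "0 < F c" using nn[of c] by linarith
      have "F \<midarrow>c\<rightarrow> F c" using cont[of c] unfolding F_def continuous_at by simp
      from LIM_D[OF this pos] obtain d where d: "d > 0" "\<And>y. y \<noteq> c \<and> norm (y - c) < d \<longrightarrow> norm (F y - F c) < F c"
        by blast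
      have "ereal (c - d) < A0" using real d by simp
      then obtain z where z: "F z = 0" "ereal (c - d) < ereal z" unfolding A0_def less_Sup_iff by auto
      have "ereal z \<le> A0" unfolding A0_def using z by (intro Sup_upper) auto
      then have "z \<le> c" using real by simp
      then show False using d(2)[of z] z pos by (cases "z = c") auto
    qed
    have "{x. ereal x < A0} \<subseteq> {..c}" using real by auto
    then have "emeasure N {x. ereal x < A0} \<le> emeasure N {..c}"
      by (intro emeasure_mono) (auto simp: N_sets)
    also have "\<dots> = ennreal (F c)" unfolding F_def cdf_def
      using finite_measure.emeasure_eq_measure[OF fmN] by simp
    finally show ?thesis using Fc by simp
  next
    case PInf
    have "F (real n) = 0" for n :: nat
    proof -
      have "ereal (real n) < A0" using PInf by simp
      then obtain z where z: "F z = 0" "real n < z" unfolding A0_def less_Sup_iff by auto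
      then show ?thesis using mono[of "real n" z] nn[of "real n"] by simp
    qed
    then have "(\<lambda>n. F (real n)) \<longlonglongrightarrow> 0" by simp
    moreover have "(\<lambda>n. F (real n)) \<longlonglongrightarrow> measure N (space N)"
      using finite_borel_measure.cdf_lim_infty[OF fbm] F_def by simp
    ultimately have "measure N (space N) = 0" using LIMSEQ_unique by metis
    with T show ?thesis by simp
  next
    case MInf then show ?thesis by simp
  qed
  then show ?thesis unfolding A0_def F_def .
qed

lemma bfrak_null:
  assumes cont: "\<And>x. isCont (cdf N) x" and T: "0 < measure N (space N)"
  shows "emeasure N {x. Inf (ereal ` {z. cdf N z = measure N (space N)}) \<le> ereal x} = 0"
proof -
  define F where "F = cdf N"
  define T' where "T' = measure N (space N)"
  define A0 where "A0 = Inf (ereal ` {z. F z = T'})"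
  have mono: "x \<le> y \<Longrightarrow> F x \<le> F y" for x y using finite_borel_measure.cdf_nondecreasing[OF fbm] F_def by blast
  have bd: "F x \<le> T'" for x using finite_borel_measure.cdf_bounded[OF fbm] F_def T'_def by blast
  have "emeasure N {x. A0 \<le> ereal x} = 0"
  proof (cases A0)
    case (real c)
    have Fc: "F c = T'"
    proof (rule ccontr)
      assume "F c \<noteq> T'" then have pos: "0 < T' - F c" using bd[of c] by linarith
      have "F \<midarrow>c\<rightarrow> F c" using cont[of c] unfolding F_def continuous_at by simp
      from LIM_D[OF this pos] obtain d where d: "d > 0" "\<And>y. y \<noteq> c \<and> norm (y - c) < d \<longrightarrow> norm (F y - F c) < T' - F c"
        by blast
      have "A0 < ereal (c + d)" using real d by simp
      then obtain z where z: "F z = T'" "ereal z < ereal (c + d)" unfolding A0_def Inf_less_iff by auto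
      have "A0 \<le> ereal z" unfolding A0_def using z by (intro Inf_lower) auto
      then have "c \<le> z" using real by simp
      then show False using d(2)[of z] z pos by (cases "z = c") auto
    qed
    have "{x. A0 \<le> ereal x} \<subseteq> {c} \<union> (space N - {..c})" using real by (auto simp: N_space)
    then have "emeasure N {x. A0 \<le> ereal x} \<le> emeasure N ({c} \<union> (space N - {..c}))"
      by (intro emeasure_mono) (auto simp: N_sets N_space)
    also have "\<dots> \<le> emeasure N {c} + emeasure N (space N - {..c})"
      by (intro emeasure_subadditive) (auto simp: N_sets N_space)
    also have "emeasure N (space N - {..c}) = ennreal (measure N (space N - {..c}))"
      using finite_measure.emeasure_eq_measure[OF fmN] by simp
    also have "measure N (space N - {..c}) = T' - F c"
      unfolding T'_def F_def cdf_def
      by (rule finite_measure.finite_measure_compl[OF fmN]) (auto simp: N_sets)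
    finally show ?thesis using Fc emeasure_single0[OF cont] by simp
  next
    case MInf
    have "F (- real n) = T'" for n :: nat
    proof -
      have "A0 < ereal (- real n)" using MInf by simp
      then obtain z where z: "F z = T'" "z < - real n" unfolding A0_def Inf_less_iff by auto
      then show ?thesis using mono[of z "- real n"] bd[of "- real n"] by simp
    qed
    then have "(\<lambda>n. F (- real n)) \<longlonglongrightarrow> T'" by simp
    moreover have "(\<lambda>n. F (- real n)) \<longlonglongrightarrow> 0"
      using finite_borel_measure.cdf_lim_neg_infty[OF fbm] F_def by simp
    ultimately have "T' = 0" using LIMSEQ_unique by metis
    with T show ?thesis unfolding T'_def by simp
  next
    case PInf then show ?thesis by simp
  qed
  then show ?thesis unfolding A0_def F_def T'_def .
qed

end

lemma cells_cover:
  fixes r :: "nat \<Rightarrow> ereal"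
  assumes "1 \<le> k" "r 1 \<le> ereal x" "ereal x < r (Suc k)"
  shows "\<exists>i\<in>{1..k}. x \<in> eico (r i) (r (Suc i))"
proof -
  define I where "I = {i\<in>{1..k}. r i \<le> ereal x}"
  have I1: "1 \<in> I" using assms I_def by auto
  have fI: "finite I" unfolding I_def by auto
  define i where "i = Max I"
  have i: "i \<in> I" unfolding i_def using Max_in[OF fI] I1 by blast
  have imax: "j \<le> i" if "j \<in> I" for j unfolding i_def using Max_ge[OF fI that] .
  have "ereal x < r (Suc i)"
  proof (cases "i = k")
    case True then show ?thesis using assms by simp
  next
    case False then have "Suc i \<in> {1..k}" using i I_def by auto
    moreover have "Suc i \<notin> I" using imax[of "Suc i"] by auto
    ultimately show ?thesis using I_def by auto
  qed
  then show ?thesis using i I_def eico_def by auto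
qed

lemma cells_strict:
  fixes a :: "nat \<Rightarrow> real" and r :: "nat \<Rightarrow> ereal"
  assumes mono: "\<And>i j. i \<in> {1..k} \<Longrightarrow> j \<in> {1..k} \<Longrightarrow> i < j \<Longrightarrow> a i < a j"
    and rdef: "\<And>i. i \<in> {2..k} \<Longrightarrow> r i = ereal ((a (i - 1) + a i) / 2)"
    and i: "i \<in> {1..k}" and j: "j \<in> {1..k}" "j \<noteq> i"
    and x: "x \<in> eico (r i) (r (Suc i))"
    and nm: "\<And>l. l \<in> {2..k} \<Longrightarrow> x \<noteq> (a (l - 1) + a l) / 2"
  shows "\<bar>x - a i\<bar> < \<bar>x - a j\<bar>"
proof (cases "j < i")
  case True
  then have i2: "i \<in> {2..k}" using i j by auto
  have "ereal ((a (i-1) + a i)/2) \<le> ereal x" using x rdef[OF i2] unfolding eico_def by simp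
  then have m: "(a (i-1) + a i)/2 < x" using nm[OF i2] by auto
  have ajle: "a j \<le> a (i - 1)"
  proof (cases "j = i - 1")
    case False
    then have "j < i - 1" using True by linarith
    moreover have "j \<in> {1..k}" "i - 1 \<in> {1..k}" using j i2 by auto
    ultimately have "a j < a (i - 1)" using mono by blast
    then show ?thesis by simp
  qed simp
  have "a (i - 1) < a i" using mono[of "i - 1" i] i2 by auto
  moreover have "(a (i-1) + a i)/2 = a (i-1)/2 + a i/2" by simp
  ultimately have h: "0 < x - a j" "a i - x < x - a j" "x - a i < x - a j" using m ajle by linarith+
  then have "\<bar>x - a j\<bar> = x - a j" by simp
  moreover have "\<bar>x - a i\<bar> < x - a j" unfolding abs_less_iff using h by simp
  ultimately show ?thesis by simp
next
  case False
  then have ij: "i < j" using j by auto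
  then have i2: "Suc i \<in> {2..k}" using i j by auto
  have "ereal x < ereal ((a i + a (Suc i))/2)" using x rdef[OF i2] unfolding eico_def by simp
  then have m: "x < (a i + a (Suc i))/2" by simp
  have ajle: "a (Suc i) \<le> a j"
  proof (cases "j = Suc i")
    case False
    then have "Suc i < j" using ij by linarith
    moreover have "j \<in> {1..k}" "Suc i \<in> {1..k}" using j i2 by auto
    ultimately have "a (Suc i) < a j" using mono by blast
    then show ?thesis by simp
  qed simp
  have "a i < a (Suc i)" using mono[of i "Suc i"] i2 i by auto
  moreover have "(a i + a (Suc i))/2 = a i/2 + a (Suc i)/2" by simp
  ultimately have h: "0 < a j - x" "a i - x < a j - x" "x - a i < a j - x" using m ajle by linarith+
  then have "\<bar>x - a j\<bar> = a j - x" by simp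
  moreover have "\<bar>x - a i\<bar> < a j - x" unfolding abs_less_iff using h by simp
  ultimately show ?thesis by simp
qed

lemma sorted_enum:
  fixes V :: "real set"
  assumes "finite V" "card V = k"
  shows "\<exists>a. (\<forall>i j. i \<in> {1..k} \<longrightarrow> j \<in> {1..k} \<longrightarrow> i < j \<longrightarrow> a i < a j) \<and> a ` {1..k} = V"
proof -
  define s where "s = sorted_list_of_set V"
  have len: "length s = k" using assms s_def by simp
  have st: "sorted_wrt (<) s" using s_def strict_sorted_list_of_set by blast
  have set_s: "set s = V" using assms s_def by simp
  define a where "a i = s ! (i - 1)" for i
  have "\<forall>i j. i \<in> {1..k} \<longrightarrow> j \<in> {1..k} \<longrightarrow> i < j \<longrightarrow> a i < a j"
    unfolding a_def using sorted_wrt_nth_less[OF st] len by auto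
  moreover have "a ` {1..k} = V"
  proof
    show "a ` {1..k} \<subseteq> V"
    proof
      fix y assume "y \<in> a ` {1..k}"
      then obtain i where i: "i \<in> {1..k}" "y = s ! (i - 1)" by (auto simp: a_def)
      then have "i - 1 < length s" using len by auto
      then show "y \<in> V" using nth_mem[of "i - 1" s] set_s i by auto
    qed
    show "V \<subseteq> a ` {1..k}"
    proof
      fix v assume "v \<in> V"
      then obtain n where n: "n < k" "s ! n = v" using set_s len by (auto simp: in_set_conv_nth)
      then have "a (Suc n) = v" "Suc n \<in> {1..k}" unfolding a_def by auto
      then show "v \<in> a ` {1..k}" by force
    qed
  qed
  ultimately show ?thesis by blast
qed

lemma powr_le_cancel:
  assumes "0 \<le> a" "0 \<le> b" "0 < p" "a powr p \<le> b powr p" shows "a \<le> (b::real)"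
proof (rule ccontr)
  assume "\<not> a \<le> b"
  then have "b powr p < a powr p" using powr_less_mono2[of p b a] assms by auto
  then show False using assms(4) by simp
qed

lemma nn_less_on_set:
  assumes [measurable]: "u \<in> borel_measurable M" "v \<in> borel_measurable M"
    and fin: "(\<integral>\<^sup>+x. v x \<partial>M) \<noteq> \<infinity>" and le: "\<And>x. v x \<le> u x"
    and S: "S \<in> sets M" "emeasure M S \<noteq> 0" and lt: "\<And>x. x \<in> S \<Longrightarrow> v x < u x"
  shows "(\<integral>\<^sup>+x. v x \<partial>M) < (\<integral>\<^sup>+x. u x \<partial>M)"
proof (rule nn_integral_less)
  show "\<not> (AE x in M. u x \<le> v x)"
  proof
    assume "AE x in M. u x \<le> v x"
    then have "AE x in M. x \<notin> S"
    proof (rule eventually_mono)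
      fix x assume "u x \<le> v x" then show "x \<notin> S" using lt[of x] by auto
    qed
    moreover have eq: "{x\<in>space M. \<not> x \<notin> S} = S" using sets.sets_into_space[OF S(1)] by auto
    ultimately have "emeasure M S = 0" using AE_iff_measurable[OF S(1) eq] by simp
    with S show False by simp
  qed
next
  show "u \<in> borel_measurable M" "v \<in> borel_measurable M" by fact+
  show "(\<integral>\<^sup>+x. v x \<partial>M) \<noteq> \<infinity>" by fact
  show "AE x in M. v x \<le> u x" by (rule AE_I2) (rule le)
qed

definition Jc :: "real measure \<Rightarrow> real \<Rightarrow> real set \<Rightarrow> real \<Rightarrow> ennreal" where
  "Jc N p C c = (\<integral>\<^sup>+x. ennreal (\<bar>x - c\<bar> powr p) * indicator C x \<partial>N)"

lemma is_pth_mean_Jc: "is_pth_mean p (\<lambda>x. x) C N a \<longleftrightarrow> (\<forall>b. Jc N p C a \<le> Jc N p C b)"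
  unfolding is_pth_mean_def Jc_def by simp

context
  fixes N :: "real measure"
  assumes fbm: "finite_borel_measure N"
begin

lemma Jc_meas[measurable]:
  assumes [measurable]: "C \<in> sets borel"
  shows "(\<lambda>x. ennreal (\<bar>x - c\<bar> powr p) * indicator C x) \<in> borel_measurable N"
  by (intro meas_N[OF fbm]) measurable

lemma Jc_less:
  assumes Cs: "C \<in> sets borel" and nz: "emeasure N C \<noteq> 0" and p: "0 < p"
    and fin: "Jc N p C c2 \<noteq> \<infinity>" and lt: "\<And>x. x \<in> C \<Longrightarrow> \<bar>x - c1\<bar> < \<bar>x - c2\<bar>"
  shows "Jc N p C c1 < Jc N p C c2"
proof -
  have le: "ennreal (\<bar>x - c1\<bar> powr p) * indicator C x \<le> ennreal (\<bar>x - c2\<bar> powr p) * indicator C x" for x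
  proof (cases "x \<in> C")
    case True then show ?thesis using lt[OF True] p by (auto intro!: ennreal_leI powr_mono2)
  qed simp
  have "Jc N p C c1 \<le> Jc N p C c2" unfolding Jc_def by (intro nn_integral_mono le)
  then have fin1: "Jc N p C c1 \<noteq> \<infinity>" using fin by (auto simp: top_unique)
  show ?thesis unfolding Jc_def
  proof (rule nn_less_on_set[OF _ _ _ le])
    show "C \<in> sets N" using Cs N_sets[OF fbm] by simp
    show "emeasure N C \<noteq> 0" by fact
    fix x assume x: "x \<in> C"
    have "\<bar>x - c1\<bar> powr p < \<bar>x - c2\<bar> powr p" using lt[OF x] p by (intro powr_less_mono2) auto
    then show "ennreal (\<bar>x - c1\<bar> powr p) * indicator C x < ennreal (\<bar>x - c2\<bar> powr p) * indicator C x"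
      using x by (auto intro!: ennreal_lessI)
  next
    show "(\<lambda>x. ennreal (\<bar>x - c2\<bar> powr p) * indicator C x) \<in> borel_measurable N" using Jc_meas[OF Cs] .
    show "(\<lambda>x. ennreal (\<bar>x - c1\<bar> powr p) * indicator C x) \<in> borel_measurable N" using Jc_meas[OF Cs] .
    show "(\<integral>\<^sup>+x. ennreal (\<bar>x - c1\<bar> powr p) * indicator C x \<partial>N) \<noteq> \<infinity>" using fin1 unfolding Jc_def .
  qed
qed

lemma pth_range:
  assumes C: "C = eico r s" and nz: "emeasure N C \<noteq> 0" and p: "0 < p"
    and mn: "\<forall>b. Jc N p C m \<le> Jc N p C b" and fin: "Jc N p C m \<noteq> \<infinity>"
  shows "r \<le> ereal m" "ereal m \<le> s"
proof -
  have Cs: "C \<in> sets borel" by (simp add: C)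
  have Cne: "C \<noteq> {}" using nz by auto
  show "r \<le> ereal m"
  proof (rule ccontr)
    assume "\<not> r \<le> ereal m" then have lt: "ereal m < r" by simp
    obtain \<rho> where \<rho>: "r = ereal \<rho>" "m < \<rho>"
    proof (cases r)
      case PInf then have "C = {}" unfolding C eico_def by auto
      then show ?thesis using Cne by simp
    qed (use lt in auto)
    have "Jc N p C \<rho> < Jc N p C m"
    proof (rule Jc_less[OF Cs nz p fin])
      fix x assume "x \<in> C" then have "\<rho> \<le> x" unfolding C eico_def \<rho> by auto
      then show "\<bar>x - \<rho>\<bar> < \<bar>x - m\<bar>" using \<rho> by auto
    qed
    then show False using mn[rule_format, of \<rho>] by simp
  qed
  show "ereal m \<le> s"
  proof (rule ccontr)
    assume "\<not> ereal m \<le> s" then have lt: "s < ereal m" by simp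
    obtain \<sigma> where \<sigma>: "s = ereal \<sigma>" "\<sigma> < m"
    proof (cases s)
      case MInf then have "C = {}" unfolding C eico_def by auto
      then show ?thesis using Cne by simp
    qed (use lt in auto)
    have "Jc N p C \<sigma> < Jc N p C m"
    proof (rule Jc_less[OF Cs nz p fin])
      fix x assume "x \<in> C" then have "x < \<sigma>" unfolding C eico_def \<sigma> by auto
      then show "\<bar>x - \<sigma>\<bar> < \<bar>x - m\<bar>" using \<sigma> by auto
    qed
    then show False using mn[rule_format, of \<sigma>] by simp
  qed
qed

lemma pth_unique:
  assumes Cs: "C \<in> sets borel" and p: "1 \<le> p" and m12: "m1 < m2"
    and mn1: "\<forall>b. Jc N p C m1 \<le> Jc N p C b" and mn2: "\<forall>b. Jc N p C m2 \<le> Jc N p C b"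
    and fin1: "Jc N p C m1 \<noteq> \<infinity>" and fin2: "Jc N p C m2 \<noteq> \<infinity>"
    and S: "emeasure N ({m1<..<m2} \<inter> C) \<noteq> 0"
  shows False
proof -
  define c where "c = (m1 + m2) / 2"
  define v where "v x = ennreal (2 * \<bar>x - c\<bar> powr p) * indicator C x" for x
  define u where "u x = ennreal (\<bar>x - m1\<bar> powr p) * indicator C x + ennreal (\<bar>x - m2\<bar> powr p) * indicator C x" for x
  have mv[measurable]: "v \<in> borel_measurable N" unfolding v_def by (intro meas_N[OF fbm]) (use Cs in measurable)
  have mu[measurable]: "u \<in> borel_measurable N" unfolding u_def by (intro meas_N[OF fbm]) (use Cs in measurable)
  have "v x = 2 * (ennreal (\<bar>x - c\<bar> powr p) * indicator C x)" for x
    unfolding v_def using ennreal_mult[of 2 "\<bar>x - c\<bar> powr p"] by (simp add: mult.assoc)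
  then have intv: "(\<integral>\<^sup>+x. v x \<partial>N) = 2 * Jc N p C c"
    unfolding Jc_def using nn_integral_cmult[OF Jc_meas[OF Cs], of 2 c p] by simp
  have intu: "(\<integral>\<^sup>+x. u x \<partial>N) = Jc N p C m1 + Jc N p C m2"
    unfolding u_def Jc_def by (rule nn_integral_add[OF Jc_meas[OF Cs] Jc_meas[OF Cs]])
  have le: "v x \<le> u x" for x
  proof (cases "x \<in> C")
    case True
    have "2 * \<bar>x - c\<bar> powr p \<le> \<bar>x - m1\<bar> powr p + \<bar>x - m2\<bar> powr p"
      unfolding c_def by (rule midpoint_abs_powr(1)[OF p])
    then have "ennreal (2 * \<bar>x - c\<bar> powr p) \<le> ennreal (\<bar>x - m1\<bar> powr p + \<bar>x - m2\<bar> powr p)"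
      by (rule ennreal_leI)
    also have "\<dots> = ennreal (\<bar>x - m1\<bar> powr p) + ennreal (\<bar>x - m2\<bar> powr p)"
      by (rule ennreal_plus) auto
    finally show ?thesis using True unfolding v_def u_def by simp
  qed (simp add: v_def u_def)
  have lt: "v x < u x" if x: "x \<in> {m1<..<m2} \<inter> C" for x
  proof -
    have "2 * \<bar>x - c\<bar> powr p < \<bar>x - m1\<bar> powr p + \<bar>x - m2\<bar> powr p"
      unfolding c_def using x by (intro midpoint_abs_powr(2)[OF p]) auto
    moreover have "0 \<le> 2 * \<bar>x - c\<bar> powr p" by simp
    ultimately have "0 < \<bar>x - m1\<bar> powr p + \<bar>x - m2\<bar> powr p" by linarith
    with \<open>2 * \<bar>x - c\<bar> powr p < \<bar>x - m1\<bar> powr p + \<bar>x - m2\<bar> powr p\<close> have "ennreal (2 * \<bar>x - c\<bar> powr p) < ennreal (\<bar>x - m1\<bar> powr p + \<bar>x - m2\<bar> powr p)"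
      by (intro ennreal_lessI) auto
    also have "\<dots> = ennreal (\<bar>x - m1\<bar> powr p) + ennreal (\<bar>x - m2\<bar> powr p)"
      by (rule ennreal_plus) auto
    finally show ?thesis using x unfolding v_def u_def by simp
  qed
  have "(\<integral>\<^sup>+x. v x \<partial>N) \<le> (\<integral>\<^sup>+x. u x \<partial>N)" by (intro nn_integral_mono le)
  then have finv: "(\<integral>\<^sup>+x. v x \<partial>N) \<noteq> \<infinity>" using fin1 fin2 intu by (auto simp: top_unique)
  have "(\<integral>\<^sup>+x. v x \<partial>N) < (\<integral>\<^sup>+x. u x \<partial>N)"
  proof (rule nn_less_on_set[OF mu mv finv le _ S lt])
    show "{m1<..<m2} \<inter> C \<in> sets N" using Cs N_sets[OF fbm] by simp
  qed
  then have "2 * Jc N p C c < Jc N p C m1 + Jc N p C m2" using intv intu by simp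
  moreover have "Jc N p C m1 + Jc N p C m2 \<le> Jc N p C c + Jc N p C c"
    using mn1 mn2 by (intro add_mono) auto
  ultimately show False by (simp add: mult_2)
qed

end

lemma r_chain:
  fixes r :: "nat \<Rightarrow> ereal"
  assumes "\<forall>i\<in>{1..k}. r i < r (Suc i)"
  shows "1 \<le> i \<Longrightarrow> i \<le> j \<Longrightarrow> j \<le> Suc k \<Longrightarrow> r i \<le> r j"
proof (induction j)
  case 0 then show ?case by simp
next
  case (Suc j)
  show ?case
  proof (cases "i = Suc j")
    case False
    then have "i \<le> j" using Suc by simp
    then have "r i \<le> r j" using Suc by simp
    moreover have "r j < r (Suc j)" using assms Suc \<open>i \<le> j\<close> by auto
    ultimately show ?thesis by simp
  qed simp
qed

theorem corollary2p6:
  fixes M :: "'a measure" and p :: real and k :: nat and f g :: "'a \<Rightarrow> real"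
  assumes "finite_measure M"
    and "emeasure M (space M) \<noteq> 0"
    and "1 \<le> p"
    and "1 \<le> k"
    and "memLp M p f"
    and "continuous_on UNIV (cdf_of M f)"
    and "g \<in> Gpk M p k"
    and "\<forall>h\<in>Gpk M p k. Lp_norm M p (\<lambda>x. f x - g x) \<le> Lp_norm M p (\<lambda>x. f x - h x)"
  shows "\<exists>(a::nat \<Rightarrow> real) (r::nat \<Rightarrow> ereal).
           (\<forall>i\<in>{1..<k}. a i < a (Suc i))
         \<and> r 1 = afrak M f \<and> r (Suc k) = bfrak M f
         \<and> (\<forall>i\<in>{1..k}. r i < r (Suc i))
         \<and> (\<forall>i\<in>{2..k}. r i = ereal ((a (i - 1) + a i) / 2))
         \<and> (\<forall>i\<in>{1..k}. measure (push M f) (eico (r i) (r (Suc i))) > 0)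
         \<and> (\<forall>i\<in>{1..k}. is_pth_mean p (\<lambda>x. x) (eico (r i) (r (Suc i))) (push M f) (a i))
         \<and> (AE x in M. g x = (\<Sum>i=1..k. a i * indicator (f -` eico (r i) (r (Suc i))) x))
         \<and> (strict_mono_on {x. afrak M f \<le> ereal x \<and> ereal x \<le> bfrak M f} (cdf_of M f)
              \<longrightarrow> (\<forall>i\<in>{1..k}. a i = Mp p (\<lambda>x. x) (eico (r i) (r (Suc i))) (push M f)))"
proof -
  note fin = assms(1) and enz = assms(2) and p1 = assms(3) and k1 = assms(4) and fL = assms(5)
    and fc = assms(6) and gG = assms(7) and gopt = assms(8)
  have fm[measurable]: "f \<in> borel_measurable M" using fL memLp_def by auto
  have p0: "0 < p" using p1 by simp
  define N where "N = push M f"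
  have Nd: "N = distr M borel f" unfolding N_def push_def ..
  have fbm: "finite_borel_measure N"
    unfolding finite_borel_measure_def finite_borel_measure_axioms_def Nd
    using finite_measure.finite_measure_distr[OF fin fm] by simp
  have Nsets: "sets N = sets borel" using N_sets[OF fbm] .
  have Nsp: "space N = UNIV" using N_space[OF fbm] .
  have cdfeq: "cdf_of M f = cdf N" by (rule ext) (simp add: cdf_of_def cdf_def N_def)
  have cont: "isCont (cdf N) x" for x using fc unfolding cdfeq by (simp add: continuous_on_eq_continuous_at)
  have emN: "emeasure N (space N) = emeasure M (space M)" unfolding Nd
    by (subst emeasure_distr[OF fm]) auto
  have mN: "measure N (space N) = measure M (space M)" using emN by (simp add: measure_def)
  have "emeasure M (space M) = ennreal (measure M (space M))"
    using finite_measure.emeasure_eq_measure[OF fin] by blast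
  then have "measure M (space M) \<noteq> 0" using enz by auto
  then have Tpos: "0 < measure N (space N)" using mN measure_nonneg[of M "space M"] by linarith
  have at: "\<forall>x. emeasure N {x} = 0" using emeasure_single0[OF fbm cont] by blast
  have nz: "emeasure N UNIV \<noteq> 0" using emN enz Nsp by simp
  define A0 where "A0 = afrak M f"
  define B0 where "B0 = bfrak M f"
  have A0n: "emeasure N {x. ereal x < A0} = 0"
    using afrak_null[OF fbm cont Tpos] unfolding A0_def afrak_def cdfeq .
  have B0n: "emeasure N {x. B0 \<le> ereal x} = 0"
    using bfrak_null[OF fbm cont Tpos] unfolding B0_def bfrak_def cdfeq mN .
  define E where "E h = (\<integral>\<^sup>+\<omega>. ennreal (\<bar>f \<omega> - h \<omega>\<bar> powr p) \<partial>M)" for h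
  define C where "C W = (\<integral>\<^sup>+x. ennreal (dS W x powr p) \<partial>N)" for W
  have CM: "C W = (\<integral>\<^sup>+\<omega>. ennreal (dS W (f \<omega>) powr p) \<partial>M)" if "finite W" for W
  proof -
    have [measurable]: "dS W \<in> borel_measurable borel" using dS_meas[OF that] .
    have "(\<lambda>x. ennreal (dS W x powr p)) \<in> borel_measurable borel" by measurable
    then show ?thesis unfolding C_def Nd by (subst nn_integral_distr[OF fm]) auto
  qed
  have Eint: "E h = ennreal (\<integral>\<omega>. \<bar>f \<omega> - h \<omega>\<bar> powr p \<partial>M)" if "memLp M p h" for h
    unfolding E_def using integrable_diff_powr[OF fL that p0] by (intro nn_integral_eq_integral) auto
  have gL: "memLp M p g" using Gpk_props(1)[OF gG] .
  have gm[measurable]: "g \<in> borel_measurable M" using gL memLp_def by auto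
  have opt: "E g \<le> E h" if hG: "h \<in> Gpk M p k" for h
  proof -
    have hL: "memLp M p h" using Gpk_props(1)[OF hG] .
    define Ig where "Ig = (\<integral>\<omega>. \<bar>f \<omega> - g \<omega>\<bar> powr p \<partial>M)"
    define Ih where "Ih = (\<integral>\<omega>. \<bar>f \<omega> - h \<omega>\<bar> powr p \<partial>M)"
    have Ig0: "0 \<le> Ig" "0 \<le> Ih" unfolding Ig_def Ih_def by (auto intro!: Bochner_Integration.integral_nonneg)
    have "Ig powr (1/p) \<le> Ih powr (1/p)" using gopt hG unfolding Lp_norm_def Ig_def Ih_def by auto
    then have "Ig \<le> Ih" using Ig0 p0 by (intro powr_le_cancel[of Ig Ih "1/p"]) auto
    then show ?thesis using Eint[OF gL] Eint[OF hL] Ig_def Ih_def by (simp add: ennreal_leI)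
  qed
  have spne: "space M \<noteq> {}" using enz by auto
  define V where "V = g ` space M"
  have Vfin: "finite V" and Vcard: "card V \<le> k" using Gpk_props[OF gG] V_def by auto
  have Vne: "V \<noteq> {}" using spne V_def by auto
  have dSVm[measurable]: "dS V \<in> borel_measurable borel" using dS_meas[OF Vfin] .
  have CW: "E g \<le> C W" if W: "finite W" "W \<noteq> {}" "card W \<le> k" for W
  proof -
    obtain h where hG: "h \<in> Gpk M p k" and hd: "\<forall>\<omega>\<in>space M. \<bar>f \<omega> - h \<omega>\<bar> = dS W (f \<omega>)"
      using nearest_Gpk[OF fin fL p0 W] by blast
    have "E h = C W" unfolding E_def CM[OF W(1)] using hd by (intro nn_integral_cong) auto
    then show ?thesis using opt[OF hG] by simp
  qed
  have dle: "dS V (f \<omega>) \<le> \<bar>f \<omega> - g \<omega>\<bar>" if "\<omega> \<in> space M" for \<omega>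
    using dS_le[OF Vfin] that V_def by auto
  have EV: "C V \<le> E g" unfolding CM[OF Vfin] E_def
    using dle p0 dS_nonneg[OF Vfin Vne] by (intro nn_integral_mono ennreal_leI powr_mono2) auto
  have EgV: "E g = C V" using CW[OF Vfin Vne Vcard] EV by simp
  have Egfin: "E g \<noteq> \<infinity>" using Eint[OF gL] by simp
  have CVfin: "C V \<noteq> \<infinity>" using Egfin EgV by simp
  have split: "C V < C U" if U: "finite U" "U \<noteq> {}" "card U < k" for U
  proof (cases "C U = \<infinity>")
    case True then show ?thesis using CVfin by (simp add: less_top)
  next
    case False
    obtain w where w: "w \<notin> U" "C (insert w U) < C U"
      using split_lemma[OF fbm at nz U(1,2) p0] False unfolding C_def by blast
    have "card (insert w U) \<le> k" using w(1) U by simp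
    then have "C V \<le> C (insert w U)" using CW[of "insert w U"] U EgV by simp
    then show ?thesis using w(2) by simp
  qed
  have cardV: "card V = k"
  proof (rule ccontr)
    assume "card V \<noteq> k" then have "card V < k" using Vcard by linarith
    then show False using split[OF Vfin Vne] by simp
  qed
  have AEg: "AE \<omega> in M. \<bar>f \<omega> - g \<omega>\<bar> = dS V (f \<omega>)"
  proof -
    have "AE \<omega> in M. ennreal (\<bar>f \<omega> - g \<omega>\<bar> powr p) \<le> ennreal (dS V (f \<omega>) powr p)"
    proof (rule ccontr)
      assume a: "\<not> (AE \<omega> in M. ennreal (\<bar>f \<omega> - g \<omega>\<bar> powr p) \<le> ennreal (dS V (f \<omega>) powr p))"
      have "(\<integral>\<^sup>+\<omega>. ennreal (dS V (f \<omega>) powr p) \<partial>M) < E g" unfolding E_def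
      proof (rule nn_integral_less)
        show "(\<lambda>\<omega>. ennreal (dS V (f \<omega>) powr p)) \<in> borel_measurable M" by measurable
        show "(\<lambda>\<omega>. ennreal (\<bar>f \<omega> - g \<omega>\<bar> powr p)) \<in> borel_measurable M" by measurable
        show "(\<integral>\<^sup>+\<omega>. ennreal (dS V (f \<omega>) powr p) \<partial>M) \<noteq> \<infinity>" using CM[OF Vfin] CVfin by simp
        show "AE \<omega> in M. ennreal (dS V (f \<omega>) powr p) \<le> ennreal (\<bar>f \<omega> - g \<omega>\<bar> powr p)"
          using dle p0 dS_nonneg[OF Vfin Vne] by (intro AE_I2 ennreal_leI powr_mono2) auto
        show "\<not> (AE \<omega> in M. ennreal (\<bar>f \<omega> - g \<omega>\<bar> powr p) \<le> ennreal (dS V (f \<omega>) powr p))" by fact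
      qed
      then show False using CM[OF Vfin] EgV by simp
    qed
    then have "AE \<omega> in M. ennreal (\<bar>f \<omega> - g \<omega>\<bar> powr p) \<le> ennreal (dS V (f \<omega>) powr p) \<and> \<omega> \<in> space M"
      using AE_space by (rule eventually_conj)
    then show ?thesis
    proof (rule eventually_mono)
      fix \<omega> assume H: "ennreal (\<bar>f \<omega> - g \<omega>\<bar> powr p) \<le> ennreal (dS V (f \<omega>) powr p) \<and> \<omega> \<in> space M"
      have nn: "0 \<le> dS V (f \<omega>) powr p" by simp
      have le1: "\<bar>f \<omega> - g \<omega>\<bar> powr p \<le> dS V (f \<omega>) powr p" using H ennreal_le_iff[OF nn] by blast
      have "\<bar>f \<omega> - g \<omega>\<bar> \<le> dS V (f \<omega>)" using powr_le_cancel[OF _ _ p0 le1] dS_nonneg[OF Vfin Vne] by simp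
      moreover have "dS V (f \<omega>) \<le> \<bar>f \<omega> - g \<omega>\<bar>" using dle H by blast
      ultimately show "\<bar>f \<omega> - g \<omega>\<bar> = dS V (f \<omega>)" by linarith
    qed
  qed
  obtain a where amono: "\<forall>i j. i \<in> {1..k} \<longrightarrow> j \<in> {1..k} \<longrightarrow> i < j \<longrightarrow> a i < a j"
    and aV: "a ` {1..k} = V"
    using sorted_enum[OF Vfin cardV] by blast
  have ainj: "i = j" if "i \<in> {1..k}" "j \<in> {1..k}" "a i = a j" for i j
  proof (rule ccontr)
    assume "i \<noteq> j"
    show False
    proof (cases "i < j")
      case True then have "a i < a j" using amono that(1,2) by blast
      then show False using that(3) by simp
    next
      case False then have "j < i" using \<open>i \<noteq> j\<close> by linarith
      then have "a j < a i" using amono that(1,2) by blast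
      then show False using that(3) by simp
    qed
  qed
  have aVi: "a i \<in> V" if "i \<in> {1..k}" for i using aV that by blast
  have Va: "\<exists>j\<in>{1..k}. v = a j" if "v \<in> V" for v using aV that by blast
  define r where "r i = (if i = 1 then A0 else if i = Suc k then B0 else ereal ((a (i - 1) + a i) / 2))" for i
  have r1: "r 1 = A0" and rk: "r (Suc k) = B0" using k1 unfolding r_def by auto
  have rmid: "r i = ereal ((a (i - 1) + a i) / 2)" if "i \<in> {2..k}" for i using that unfolding r_def by auto
  define Cl where "Cl i = eico (r i) (r (Suc i))" for i
  have Cls[measurable]: "Cl i \<in> sets borel" for i unfolding Cl_def by simp
  define Md where "Md = (\<lambda>l. (a (l - 1) + a l) / 2) ` {2..k}"
  have Mdf: "finite Md" unfolding Md_def by simp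
  define G where "G = eico A0 B0 - Md"
  have Gs: "G \<in> sets borel" unfolding G_def using fin_sets[OF Mdf] by (intro sets.Diff eico_sets) auto
  have s1: "{x. ereal x < A0} = eico (-\<infinity>) A0" unfolding eico_def by auto
  have s2: "{x. B0 \<le> ereal x} = eico B0 \<infinity>" unfolding eico_def by auto
  have n1: "{x. ereal x < A0} \<in> null_sets N" using A0n unfolding s1 by (intro null_setsI) (auto simp: Nsets)
  have n2: "{x. B0 \<le> ereal x} \<in> null_sets N" using B0n unfolding s2 by (intro null_setsI) (auto simp: Nsets)
  have n3: "Md \<in> null_sets N" using finite_null[OF fbm at Mdf] fin_sets[OF Mdf] by (intro null_setsI) (auto simp: Nsets)
  have AEG: "AE x in N. x \<in> G"
  proof (rule AE_I')
    show "{x. ereal x < A0} \<union> {x. B0 \<le> ereal x} \<union> Md \<in> null_sets N"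
      using n1 n2 n3 by (intro null_sets.Un)
    show "{x \<in> space N. \<not> x \<in> G} \<subseteq> {x. ereal x < A0} \<union> {x. B0 \<le> ereal x} \<union> Md"
      unfolding G_def eico_def by auto
  qed
  have AEGM: "AE \<omega> in M. f \<omega> \<in> G"
    using AEG unfolding Nd by (subst (asm) AE_distr_iff[OF fm]) (auto simp: Gs)
  have cover: "\<exists>i\<in>{1..k}. x \<in> Cl i" if "x \<in> G" for x
    using cells_cover[OF k1, of r x] that r1 rk unfolding G_def eico_def Cl_def by auto
  have strict: "\<bar>x - a i\<bar> < \<bar>x - a j\<bar>" if x: "x \<in> G" and ij: "i \<in> {1..k}" "j \<in> {1..k}" "j \<noteq> i" and xc: "x \<in> Cl i" for x i j
  proof (rule cells_strict[of k a r i j x])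
    show "\<And>i j. i \<in> {1..k} \<Longrightarrow> j \<in> {1..k} \<Longrightarrow> i < j \<Longrightarrow> a i < a j" using amono by blast
    show "\<And>i. i \<in> {2..k} \<Longrightarrow> r i = ereal ((a (i - 1) + a i) / 2)" using rmid by blast
    show "x \<in> eico (r i) (r (Suc i))" using xc Cl_def by simp
    show "\<And>l. l \<in> {2..k} \<Longrightarrow> x \<noteq> (a (l - 1) + a l) / 2" using x unfolding G_def Md_def by auto
  qed (use ij in auto)
  have dSc: "dS V x = \<bar>x - a i\<bar>" if x: "x \<in> G" and i: "i \<in> {1..k}" and xc: "x \<in> Cl i" for x i
  proof -
    obtain v where v: "v \<in> V" "dS V x = \<bar>x - v\<bar>" using dS_ex[OF Vfin Vne] by blast
    obtain j where j: "j \<in> {1..k}" "v = a j" using Va[OF v(1)] by blast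
    have le: "dS V x \<le> \<bar>x - a i\<bar>" using dS_le[OF Vfin aVi[OF i]] .
    show ?thesis
    proof (cases "j = i")
      case True then show ?thesis using v j by simp
    next
      case False
      then have "\<bar>x - a i\<bar> < \<bar>x - a j\<bar>" using strict[OF x i j(1) False xc] by simp
      then show ?thesis using le v j by simp
    qed
  qed
  have uniq: "i = j" if x: "x \<in> G" and ij: "i \<in> {1..k}" "j \<in> {1..k}" and xc: "x \<in> Cl i" "x \<in> Cl j" for x i j
  proof (rule ccontr)
    assume ij': "i \<noteq> j"
    have "\<bar>x - a i\<bar> < \<bar>x - a j\<bar>" using strict[OF x ij(1,2) _ xc(1)] ij' by simp
    moreover have "\<bar>x - a j\<bar> < \<bar>x - a i\<bar>" using strict[OF x ij(2,1) _ xc(2)] ij' by simp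
    ultimately show False by simp
  qed
  have AErep: "AE \<omega> in M. g \<omega> = (\<Sum>i=1..k. a i * indicator (f -` Cl i) \<omega>)"
    using eventually_conj[OF eventually_conj[OF AEg AEGM] AE_space]
  proof (rule eventually_mono)
    fix \<omega> assume H: "(\<bar>f \<omega> - g \<omega>\<bar> = dS V (f \<omega>) \<and> f \<omega> \<in> G) \<and> \<omega> \<in> space M"
    then have H1: "\<bar>f \<omega> - g \<omega>\<bar> = dS V (f \<omega>)" and H2: "f \<omega> \<in> G" and H3: "\<omega> \<in> space M" by auto
    obtain i where i: "i \<in> {1..k}" "f \<omega> \<in> Cl i" using cover[OF H2] by blast
    have "g \<omega> \<in> V" using H3 V_def by simp
    then obtain j where j: "j \<in> {1..k}" "g \<omega> = a j" using Va by blast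
    have ji: "j = i"
    proof (rule ccontr)
      assume "j \<noteq> i"
      then have "\<bar>f \<omega> - a i\<bar> < \<bar>f \<omega> - a j\<bar>" using strict[OF H2 i(1) j(1) _ i(2)] by simp
      moreover have "\<bar>f \<omega> - a j\<bar> = \<bar>f \<omega> - a i\<bar>" using H1 j(2) dSc[OF H2 i] by simp
      ultimately show False by simp
    qed
    have "(\<Sum>l=1..k. a l * indicator (f -` Cl l) \<omega>) = (\<Sum>l=1..k. if l = i then a l else 0)"
    proof (rule sum.cong)
      fix l assume l: "l \<in> {1..k}"
      show "a l * indicator (f -` Cl l) \<omega> = (if l = i then a l else 0)"
      proof (cases "l = i")
        case True then show ?thesis using i(2) by (simp add: indicator_def)
      next
        case False
        then have "f \<omega> \<notin> Cl l" using uniq[OF H2 i(1) l i(2)] by blast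
        then show ?thesis using False by (simp add: indicator_def)
      qed
    qed simp
    also have "\<dots> = a i" using i(1) by simp
    finally show "g \<omega> = (\<Sum>i=1..k. a i * indicator (f -` Cl i) \<omega>)" using j ji by simp
  qed
  have AEnot: "AE x in N. x \<notin> Cl i" if "emeasure N (Cl i) = 0" for i
  proof -
    have "{x\<in>space N. \<not> x \<notin> Cl i} = Cl i" using Nsp by auto
    moreover have "Cl i \<in> sets N" using Nsets by simp
    ultimately show ?thesis using AE_iff_measurable[of "Cl i" N "\<lambda>x. x \<notin> Cl i"] that by auto
  qed
  have pos: "0 < measure N (Cl i)" if i: "i \<in> {1..k}" for i
  proof (rule ccontr)
    assume "\<not> 0 < measure N (Cl i)"
    then have "measure N (Cl i) = 0" using measure_nonneg[of N "Cl i"] by linarith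
    then have m0: "emeasure N (Cl i) = 0" using finite_measure.emeasure_eq_measure[OF fmN[OF fbm]] by simp
    show False
    proof (cases "k = 1")
      case True
      then have i1: "i = 1" using i by simp
      have "AE x in N. False" using AEnot[OF m0] AEG
      proof eventually_elim
        case (elim x) then show ?case using cover[OF elim(2)] True i1 by auto
      qed
      then have "emeasure N (space N) = 0" using AE_iff_measurable[of "space N" N "\<lambda>_. False"] by auto
      then show False using nz Nsp by simp
    next
      case False
      define U where "U = V - {a i}"
      have Uf: "finite U" using Vfin U_def by simp
      have Uc: "card U = k - 1" using cardV aVi[OF i] Vfin U_def by (simp add: card_Diff_singleton)
      have Une: "U \<noteq> {}"
      proof
        assume "U = {}" then have "k - 1 = 0" using Uc by simp
        then show False using False k1 by simp
      qed
      have "C V < C U" using split[OF Uf Une] Uc k1 by simp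
      moreover have "C U \<le> C V" unfolding C_def
      proof (rule nn_integral_mono_AE)
        show "AE x in N. ennreal (dS U x powr p) \<le> ennreal (dS V x powr p)"
          using AEnot[OF m0] AEG
        proof eventually_elim
          case (elim x)
          obtain j where j: "j \<in> {1..k}" "x \<in> Cl j" using cover[OF elim(2)] by blast
          have ji: "j \<noteq> i" using j elim(1) by auto
          have "a j \<in> U" using aVi[OF j(1)] ainj[OF j(1) i] ji U_def by auto
          then have "dS U x \<le> dS V x" using dS_le[OF Uf] dSc[OF elim(2) j] by simp
          then show ?case using p0 dS_nonneg[OF Uf Une] by (intro ennreal_leI powr_mono2) auto
        qed
      qed
      ultimately show False by simp
    qed
  qed
  have rlt: "\<forall>i\<in>{1..k}. r i < r (Suc i)"
  proof
    fix i assume i: "i \<in> {1..k}"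
    show "r i < r (Suc i)"
    proof (rule ccontr)
      assume nlt: "\<not> r i < r (Suc i)"
      have "Cl i = {}"
      proof (rule equals0I)
        fix x assume "x \<in> Cl i"
        then have "r i \<le> ereal x" "ereal x < r (Suc i)" unfolding Cl_def eico_def by auto
        then show False using nlt by (meson le_less_trans)
      qed
      then show False using pos[OF i] by simp
    qed
  qed
  have JcV: "Jc N p (Cl i) (a i) = (\<integral>\<^sup>+x. ennreal (dS V x powr p) * indicator (Cl i) x \<partial>N)" if i: "i \<in> {1..k}" for i
  proof -
    have "AE x in N. ennreal (\<bar>x - a i\<bar> powr p) * indicator (Cl i) x = ennreal (dS V x powr p) * indicator (Cl i) x"
      using AEG by eventually_elim (auto simp: dSc[OF _ i] indicator_def)
    then show ?thesis unfolding Jc_def by (rule nn_integral_cong_AE)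
  qed
  have Jfin: "Jc N p (Cl i) (a i) \<noteq> \<infinity>" if i: "i \<in> {1..k}" for i
  proof -
    have "Jc N p (Cl i) (a i) \<le> C V" unfolding JcV[OF i] C_def
      by (intro nn_integral_mono) (auto simp: indicator_def)
    then show ?thesis using CVfin by (auto simp: top_unique)
  qed
  have pm: "\<forall>b. Jc N p (Cl i) (a i) \<le> Jc N p (Cl i) b" if i: "i \<in> {1..k}" for i
  proof (rule ccontr)
    assume "\<not> (\<forall>b. Jc N p (Cl i) (a i) \<le> Jc N p (Cl i) b)"
    then obtain b where b: "Jc N p (Cl i) b < Jc N p (Cl i) (a i)" by (auto simp: not_le)
    define W where "W = insert b (V - {a i})"
    have Wf: "finite W" "W \<noteq> {}" using Vfin W_def by auto
    have Wc: "card W \<le> k"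
    proof -
      have "card W \<le> Suc (card (V - {a i}))" unfolding W_def using Vfin by (simp add: card_insert_if)
      also have "card (V - {a i}) = k - 1" using cardV aVi[OF i] Vfin by (simp add: card_Diff_singleton)
      finally show ?thesis using k1 by simp
    qed
    define R where "R = (\<integral>\<^sup>+x. ennreal (dS V x powr p) * indicator (UNIV - Cl i) x \<partial>N)"
    have mV[measurable]: "dS V \<in> borel_measurable N" using meas_N[OF fbm dS_meas[OF Vfin]] .
    have mW[measurable]: "dS W \<in> borel_measurable N" using meas_N[OF fbm dS_meas[OF Wf(1)]] .
    have m3[measurable]: "Cl i \<in> sets N" using Nsets by simp
    have m4[measurable]: "UNIV - Cl i \<in> sets N" using sets.compl_sets[OF m3] Nsp by simp
    have mJ[measurable]: "(\<lambda>x. ennreal (\<bar>x - c\<bar> powr p) * indicator (Cl i) x) \<in> borel_measurable N" for c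
      using Jc_meas[OF fbm Cls] .
    have "C W \<le> (\<integral>\<^sup>+x. ennreal (\<bar>x - b\<bar> powr p) * indicator (Cl i) x + ennreal (dS V x powr p) * indicator (UNIV - Cl i) x \<partial>N)"
      unfolding C_def
    proof (rule nn_integral_mono_AE)
      show "AE x in N. ennreal (dS W x powr p) \<le> ennreal (\<bar>x - b\<bar> powr p) * indicator (Cl i) x + ennreal (dS V x powr p) * indicator (UNIV - Cl i) x"
        using AEG
      proof eventually_elim
        case (elim x)
        show ?case
        proof (cases "x \<in> Cl i")
          case True
          have "dS W x \<le> \<bar>x - b\<bar>" using dS_le[OF Wf(1)] W_def by simp
          then show ?thesis using True p0 dS_nonneg[OF Wf] by (auto intro!: ennreal_leI powr_mono2)
        next
          case False
          obtain j where j: "j \<in> {1..k}" "x \<in> Cl j" using cover[OF elim] by blast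
          have ji: "j \<noteq> i" using j False by auto
          have "a j \<in> W" using aVi[OF j(1)] ainj[OF j(1) i] ji W_def by auto
          then have "dS W x \<le> dS V x" using dS_le[OF Wf(1)] dSc[OF elim j] by simp
          then show ?thesis using False p0 dS_nonneg[OF Wf] by (auto intro!: ennreal_leI powr_mono2)
        qed
      qed
    qed
    also have "\<dots> = Jc N p (Cl i) b + R" unfolding Jc_def R_def by (rule nn_integral_add) auto
    finally have CWle: "C W \<le> Jc N p (Cl i) b + R" .
    have "C V = (\<integral>\<^sup>+x. ennreal (\<bar>x - a i\<bar> powr p) * indicator (Cl i) x + ennreal (dS V x powr p) * indicator (UNIV - Cl i) x \<partial>N)"
      unfolding C_def
    proof (rule nn_integral_cong_AE)
      show "AE x in N. ennreal (dS V x powr p) = ennreal (\<bar>x - a i\<bar> powr p) * indicator (Cl i) x + ennreal (dS V x powr p) * indicator (UNIV - Cl i) x"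
        using AEG by eventually_elim (auto simp: dSc[OF _ i] indicator_def)
    qed
    also have "\<dots> = Jc N p (Cl i) (a i) + R" unfolding Jc_def R_def by (rule nn_integral_add) auto
    finally have CVeq: "C V = Jc N p (Cl i) (a i) + R" .
    have Rfin: "R \<noteq> \<infinity>" using CVeq CVfin by auto
    have "Jc N p (Cl i) b + R < Jc N p (Cl i) (a i) + R"
      using b Rfin by (simp add: add.commute[of _ R] ennreal_add_left_cancel_less)
    then have "C W < C V" using le_less_trans[OF CWle] CVeq by simp
    moreover have "C V \<le> C W" using CW[OF Wf Wc] EgV by simp
    ultimately show False by simp
  qed
  have smpart: "\<forall>i\<in>{1..k}. a i = Mp p (\<lambda>x. x) (Cl i) N"
    if SM: "strict_mono_on {x. A0 \<le> ereal x \<and> ereal x \<le> B0} (cdf_of M f)"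
  proof
    fix i assume i: "i \<in> {1..k}"
    have nzC: "emeasure N (Cl i) \<noteq> 0" using pos[OF i] by (auto simp: measure_def)
    have ri: "A0 \<le> r i" using r_chain[OF rlt, of 1 i] r1 i by auto
    have rsi: "r (Suc i) \<le> B0" using r_chain[OF rlt, of "Suc i" "Suc k"] rk i by auto
    have key: False if m12: "m1 < m2" and h1: "\<forall>b. Jc N p (Cl i) m1 \<le> Jc N p (Cl i) b"
      and h2: "\<forall>b. Jc N p (Cl i) m2 \<le> Jc N p (Cl i) b" for m1 m2
    proof -
      have "Jc N p (Cl i) m1 \<le> Jc N p (Cl i) (a i)" using h1 by blast
      then have f1: "Jc N p (Cl i) m1 \<noteq> \<infinity>" using Jfin[OF i] by (auto simp: top_unique)
      have "Jc N p (Cl i) m2 \<le> Jc N p (Cl i) (a i)" using h2 by blast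
      then have f2: "Jc N p (Cl i) m2 \<noteq> \<infinity>" using Jfin[OF i] by (auto simp: top_unique)
      have rg1: "r i \<le> ereal m1" using pth_range(1)[OF fbm Cl_def[of i] nzC p0 h1 f1] .
      have rg2: "ereal m2 \<le> r (Suc i)" using pth_range(2)[OF fbm Cl_def[of i] nzC p0 h2 f2] .
      define a' where "a' = m1 + (m2 - m1) / 3"
      define b' where "b' = m1 + 2 * (m2 - m1) / 3"
      have ab: "m1 < a'" "a' < b'" "b' < m2" using m12 unfolding a'_def b'_def by (simp_all add: field_simps)
      have low: "A0 \<le> ereal y" if "m1 < y" for y
      proof -
        have "ereal m1 \<le> ereal y" using that by simp
        then show ?thesis using ri rg1 by (meson order.trans)
      qed
      have up: "ereal y < r (Suc i)" if "y < m2" for y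
      proof -
        have "ereal y < ereal m2" using that by simp
        then show ?thesis using rg2 by (meson less_le_trans)
      qed
      have "ereal a' \<le> B0" using order.trans[OF less_imp_le[OF up[of a']] rsi] ab by simp
      then have Ia: "a' \<in> {x. A0 \<le> ereal x \<and> ereal x \<le> B0}" using low[of a'] ab by simp
      have "ereal b' \<le> B0" using order.trans[OF less_imp_le[OF up[of b']] rsi] ab by simp
      then have Ib: "b' \<in> {x. A0 \<le> ereal x \<and> ereal x \<le> B0}" using low[of b'] ab by simp
      have "cdf N a' < cdf N b'" using strict_mono_onD[OF SM Ia Ib ab(2)] cdfeq by simp
      then have "0 < measure N {a'<..b'}" using finite_borel_measure.cdf_diff_eq[OF fbm ab(2)] by simp
      then have e0: "emeasure N {a'<..b'} \<noteq> 0" by (auto simp: measure_def)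
      have sub: "{a'<..b'} \<subseteq> {m1<..<m2} \<inter> Cl i"
      proof
        fix y assume "y \<in> {a'<..b'}"
        then have y: "m1 < y" "y < m2" using ab by auto
        have "ereal m1 \<le> ereal y" using y(1) by simp
        then have "r i \<le> ereal y" by (rule order.trans[OF rg1])
        then show "y \<in> {m1<..<m2} \<inter> Cl i" using y up[OF y(2)] unfolding Cl_def eico_def by auto
      qed
      have "emeasure N {a'<..b'} \<le> emeasure N ({m1<..<m2} \<inter> Cl i)"
        using sub by (intro emeasure_mono) (auto simp: Nsets)
      then have "emeasure N ({m1<..<m2} \<inter> Cl i) \<noteq> 0" using e0 by auto
      then show False using pth_unique[OF fbm Cls p1 m12 h1 h2 f1 f2] by blast
    qed
    have mins: "m = a i" if mm: "\<forall>b. Jc N p (Cl i) m \<le> Jc N p (Cl i) b" for m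
    proof (cases m "a i" rule: linorder_cases)
      case less then show ?thesis using key[OF less mm pm[OF i]] by blast
    next
      case greater then show ?thesis using key[OF greater pm[OF i] mm] by blast
    qed simp
    have Sset: "{m. is_pth_mean p (\<lambda>x. x) (Cl i) N m} = {a i}"
      using mins pm[OF i] unfolding is_pth_mean_Jc by blast
    show "a i = Mp p (\<lambda>x. x) (Cl i) N"
    proof (cases "p > 1")
      case True
      have "(THE m. is_pth_mean p (\<lambda>x. x) (Cl i) N m) = a i" using Sset by (intro the_equality) auto
      then show ?thesis unfolding Mp_def using True by simp
    next
      case False
      then show ?thesis unfolding Mp_def using Sset by simp
    qed
  qed
  show ?thesis
  proof (intro exI[of _ a] exI[of _ r] conjI)
    show "\<forall>i\<in>{1..<k}. a i < a (Suc i)" using amono by auto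
    show "r 1 = afrak M f" using r1 A0_def by simp
    show "r (Suc k) = bfrak M f" using rk B0_def by simp
    show "\<forall>i\<in>{1..k}. r i < r (Suc i)" by fact
    show "\<forall>i\<in>{2..k}. r i = ereal ((a (i - 1) + a i) / 2)" using rmid by blast
    show "\<forall>i\<in>{1..k}. measure (push M f) (eico (r i) (r (Suc i))) > 0"
      using pos unfolding Cl_def N_def by blast
    show "\<forall>i\<in>{1..k}. is_pth_mean p (\<lambda>x. x) (eico (r i) (r (Suc i))) (push M f) (a i)"
      using pm unfolding is_pth_mean_Jc Cl_def N_def by blast
    show "AE x in M. g x = (\<Sum>i=1..k. a i * indicator (f -` eico (r i) (r (Suc i))) x)"
      using AErep unfolding Cl_def by blast
    show "strict_mono_on {x. afrak M f \<le> ereal x \<and> ereal x \<le> bfrak M f} (cdf_of M f)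
              \<longrightarrow> (\<forall>i\<in>{1..k}. a i = Mp p (\<lambda>x. x) (eico (r i) (r (Suc i))) (push M f))"
      using smpart unfolding A0_def B0_def Cl_def N_def by blast
  qed
qed

end
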